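(* Let $(\mathbf{w},\mathbf{u},q)$ be a sufficiently smooth solution of the GePUP-E formulation (described in the context) on $\Omega\times[t_0,\infty)$. Then $$\frac{\partial(\mathbf{n}\cdot\mathbf{w})}{\partial t}=-\lambda\,\mathbf{n}\cdot\mathbf{w}\quad\text{on }\partial\Omega,$$ and thus $\mathbf{n}\cdot\mathbf{w}(t)=e^{-\lambda(t-t_0)}\mathbf{n}\cdot\mathbf{w}(t_0)$ on $\partial\Omega$. In particular, if $\mathbf{n}\cdot\mathbf{w}(t_0)=0$ on $\partial\Omega$, then $\mathbf{n}\cdot\mathbf{w}(t)=0$ on $\partial\Omega$ for all $t>t_0$.
   Context: $\Omega\subset\mathbb{R}^D$ is a bounded connected open set with sufficiently smooth boundary, unit outward normal $\mathbf{n}$ and unit tangent vector(s) $\boldsymbol{\tau}$ on $\partial\Omega$. $\nu>0$ is the kinematic viscosity, $\mathbf{g}$ a given body force, $\lambda\ge 0$ a penalty parameter. The Leray–Helmholtz projection $\mathscr{P}$ maps a $C^1$ vector field $\mathbf{v}^*$ to $\mathbf{v}^*-\nabla\phi$ where $\Delta\phi=\nabla\cdot\mathbf{v}^*$ in $\Omega$ and $\mathbf{n}\cdot\nabla\phi=\mathbf{n}\cdot\mathbf{v}^*$ on $\partial\Omega$ (so $\mathscr{P}\mathbf{v}^*$ is divergence-free with zero normal component). The GePUP-E formulation is the system for $(\mathbf{w},\mathbf{u},q)$: $\partial_t\mathbf{w}=\mathbf{g}-\mathbf{u}\cdot\nabla\mathbf{u}-\nabla q+\nu\Delta\mathbf{w}$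 in $\Omega$; $\mathbf{w}\cdot\boldsymbol{\tau}=0$ and $\nabla\cdot\mathbf{w}=0$ on $\partial\Omega$; $\mathbf{u}=\mathscr{P}\mathbf{w}$ in $\Omega$, $\mathbf{u}\cdot\mathbf{n}=0$ on $\partial\Omega$; $\Delta q=\nabla\cdot(\mathbf{g}-\mathbf{u}\cdot\nabla\mathbf{u})$ in $\Omega$; $\mathbf{n}\cdot\nabla q=\mathbf{n}\cdot(\mathbf{g}-\mathbf{u}\cdot\nabla\mathbf{u}+\nu\Delta\mathbf{w})+\lambda\,\mathbf{n}\cdot\mathbf{w}$ on $\partial\Omega$; with initial condition $\mathbf{w}(\mathbf{x},t_0)=\mathbf{u}(\mathbf{x},t_0)$ for all $\mathbf{x}\in\overline{\Omega}$. *)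

theory Defs
  imports "HOL-Analysis.Analysis"
begin

definition C1_on :: "('a::real_normed_vector \<Rightarrow> 'b::real_normed_vector) \<Rightarrow> 'a set \<Rightarrow> bool" where
  "C1_on f U \<longleftrightarrow> (\<exists>f'. (\<forall>x\<in>U. (f has_derivative blinfun_apply (f' x)) (at x)) \<and> continuous_on U f')"

definition C2_on :: "('a::real_normed_vector \<Rightarrow> 'b::real_normed_vector) \<Rightarrow> 'a set \<Rightarrow> bool" where
  "C2_on f U \<longleftrightarrow> (\<exists>f'. (\<forall>x\<in>U. (f has_derivative blinfun_apply (f' x)) (at x)) \<and> C1_on f' U)"

definition partial :: "'n::finite \<Rightarrow> (real^'n \<Rightarrow> 'b::real_normed_vector) \<Rightarrow> real^'n \<Rightarrow> 'b" where
  "partial i f x = vector_derivative (\<lambda>s. f (x + s *\<^sub>R axis i 1)) (at 0)"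

definition grad :: "(real^'n::finite \<Rightarrow> real) \<Rightarrow> real^'n \<Rightarrow> real^'n" where
  "grad f x = (\<chi> i. partial i f x)"

definition divg :: "(real^'n::finite \<Rightarrow> real^'n) \<Rightarrow> real^'n \<Rightarrow> real" where
  "divg v x = (\<Sum>i\<in>UNIV. partial i (\<lambda>y. v y $ i) x)"

definition lap :: "(real^'n::finite \<Rightarrow> 'b::real_normed_vector) \<Rightarrow> real^'n \<Rightarrow> 'b" where
  "lap f x = (\<Sum>i\<in>UNIV. partial i (\<lambda>y. partial i f y) x)"

definition conv :: "(real^'n::finite \<Rightarrow> real^'n) \<Rightarrow> (real^'n \<Rightarrow> real^'n) \<Rightarrow> real^'n \<Rightarrow> real^'n" where
  "conv u v x = (\<Sum>i\<in>UNIV. (u x $ i) *\<^sub>R partial i v x)"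

definition dt :: "(real^'n::finite \<Rightarrow> real \<Rightarrow> 'b::real_normed_vector) \<Rightarrow> real^'n \<Rightarrow> real \<Rightarrow> 'b" where
  "dt w x t = vector_derivative (\<lambda>s. w x s) (at t)"

definition outward_unit_normal :: "(real^'n::finite) set \<Rightarrow> (real^'n \<Rightarrow> real^'n) \<Rightarrow> bool" where
  "outward_unit_normal \<Omega> nrm \<longleftrightarrow>
     (\<forall>p\<in>frontier \<Omega>. \<exists>V \<phi>. open V \<and> p \<in> V \<and> C2_on \<phi> V \<and>
        (\<forall>x\<in>V. x \<in> \<Omega> \<longleftrightarrow> \<phi> x < 0) \<and> grad \<phi> p \<noteq> 0 \<and>
        nrm p = (1 / norm (grad \<phi> p)) *\<^sub>R grad \<phi> p)"

end

theory Submission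
  imports Defs
begin

lemma partial_D:
  fixes w :: "real^'n::finite \<Rightarrow> real \<Rightarrow> 'b::real_normed_vector"
  assumes "((\<lambda>(x,t). w x t) has_derivative blinfun_apply D) (at (x,t))"
  shows "((\<lambda>s. w (x + s *\<^sub>R v) t) has_vector_derivative D (v, 0)) (at 0)"
proof -
  have 1: "((\<lambda>s::real. (x + s *\<^sub>R v, t)) has_derivative (\<lambda>s. (s *\<^sub>R v, 0))) (at 0)"
    by (auto intro!: derivative_eq_intros)
  have 2: "((\<lambda>(x,t). w x t) has_derivative blinfun_apply D) (at ((\<lambda>s::real. (x + s *\<^sub>R v, t)) 0))"
    using assms by simp
  have "((\<lambda>s. (\<lambda>(x,t). w x t) (x + s *\<^sub>R v, t)) has_derivative (\<lambda>s. D (s *\<^sub>R v, 0))) (at 0)"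
    using has_derivative_compose[OF 1 2] by simp
  moreover have "\<And>s. D (s *\<^sub>R v, 0) = s *\<^sub>R D (v,0)"
  proof -
    fix s :: real have "(s *\<^sub>R v, 0::real) = s *\<^sub>R (v, 0)" by simp
    then show "D (s *\<^sub>R v, 0) = s *\<^sub>R D (v,0)" by (metis blinfun.scaleR_right)
  qed
  ultimately show ?thesis unfolding has_vector_derivative_def by simp
qed

lemma partial_eq:
  fixes w :: "real^'n::finite \<Rightarrow> real \<Rightarrow> 'b::real_normed_vector"
  assumes "((\<lambda>(x,t). w x t) has_derivative blinfun_apply D) (at (x,t))"
  shows "partial i (\<lambda>y. w y t) x = D (axis i 1, 0)"
  unfolding partial_def using partial_D[OF assms] vector_derivative_at by blast

lemma dt_D:
  fixes w :: "real^'n::finite \<Rightarrow> real \<Rightarrow> 'b::real_normed_vector"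
  assumes "((\<lambda>(x,t). w x t) has_derivative blinfun_apply D) (at (x,t))"
  shows "((\<lambda>s. w x s) has_vector_derivative D (0, 1)) (at t)"
proof -
  have 1: "((\<lambda>s::real. (x, s)) has_derivative (\<lambda>s. (0, s))) (at t)"
    by (auto intro!: derivative_eq_intros)
  have 2: "((\<lambda>(x,t). w x t) has_derivative blinfun_apply D) (at ((\<lambda>s::real. (x, s)) t))"
    using assms by simp
  have h: "((\<lambda>s. w x s) has_derivative (\<lambda>s. D (0, s))) (at t)"
    using has_derivative_compose[OF 1 2] by simp
  have e: "(\<lambda>s. D (0, s)) = (\<lambda>s. s *\<^sub>R D (0,1))"
  proof
    fix s :: real have eq0: "(0::real^'n, s) = s *\<^sub>R (0, 1)" by simp
    show "D (0, s) = s *\<^sub>R D (0,1)" unfolding eq0 by (rule blinfun.scaleR_right)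
  qed
  show ?thesis unfolding has_vector_derivative_def using h unfolding e .
qed

lemma dt_eq:
  fixes w :: "real^'n::finite \<Rightarrow> real \<Rightarrow> 'b::real_normed_vector"
  assumes "((\<lambda>(x,t). w x t) has_derivative blinfun_apply D) (at (x,t))"
  shows "dt w x t = D (0, 1)"
  unfolding dt_def using dt_D[OF assms] vector_derivative_at by blast

lemma partial_from_vd:
  assumes "((\<lambda>s. f (x + s *\<^sub>R axis i 1)) has_vector_derivative D) (at 0)"
  shows "partial i f x = D"
  unfolding partial_def using assms by (rule vector_derivative_at)

lemma partial2_eq:
  fixes w :: "real^'n::finite \<Rightarrow> real \<Rightarrow> 'b::real_normed_vector"
  assumes U: "open U" "(x,t) \<in> U"
    and d1: "\<And>z. z \<in> U \<Longrightarrow> ((\<lambda>(x,t). w x t) has_derivative blinfun_apply (D z)) (at z)"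
    and d2: "\<And>z. z \<in> U \<Longrightarrow> (D has_derivative blinfun_apply (D2 z)) (at z)"
  shows "partial i (\<lambda>y. partial i (\<lambda>y'. w y' t) y) x = D2 (x,t) (axis i 1, 0) (axis i 1, 0)"
proof -
  let ?e = "axis i 1 :: real^'n"
  define S where "S = (\<lambda>s::real. (x + s *\<^sub>R ?e, t)) -` U"
  have oS: "open S" unfolding S_def
    by (rule continuous_open_vimage[OF U(1)]) (auto intro!: continuous_intros)
  have S0: "0 \<in> S" using U by (simp add: S_def)
  have eq: "D (x + s *\<^sub>R ?e, t) (?e, 0) = partial i (\<lambda>y'. w y' t) (x + s *\<^sub>R ?e)" if "s \<in> S" for s
    using partial_eq[OF d1] that by (simp add: S_def)
  have 1: "((\<lambda>s::real. (x + s *\<^sub>R ?e, t)) has_derivative (\<lambda>s. (s *\<^sub>R ?e, 0))) (at 0)"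
    by (auto intro!: derivative_eq_intros)
  have 2: "(D has_derivative blinfun_apply (D2 (x,t))) (at ((\<lambda>s::real. (x + s *\<^sub>R ?e, t)) 0))"
    using d2 U by simp
  have 3: "((\<lambda>s. D (x + s *\<^sub>R ?e, t)) has_derivative (\<lambda>s. D2 (x,t) (s *\<^sub>R ?e, 0))) (at 0)"
    using has_derivative_compose[OF 1 2] by simp
  have 4: "((\<lambda>s. D (x + s *\<^sub>R ?e, t) (?e, 0)) has_derivative (\<lambda>s. D2 (x,t) (s *\<^sub>R ?e, 0) (?e,0))) (at 0)"
    using blinfun.FDERIV[OF 3 has_derivative_const[of "(?e,0)"]] by (simp add: blinfun.zero_right)
  moreover have "\<And>s. D2 (x,t) (s *\<^sub>R ?e, 0) (?e,0) = s *\<^sub>R D2 (x,t) (?e, 0) (?e,0)"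
  proof -
    fix s :: real have eq0: "(s *\<^sub>R ?e, 0::real) = s *\<^sub>R (?e, 0)" by simp
    show "D2 (x,t) (s *\<^sub>R ?e, 0) (?e,0) = s *\<^sub>R D2 (x,t) (?e, 0) (?e,0)"
      unfolding eq0 blinfun.scaleR_right by (simp add: scaleR_blinfun.rep_eq)
  qed
  ultimately have hv: "((\<lambda>s. D (x + s *\<^sub>R ?e, t) (?e, 0)) has_vector_derivative D2 (x,t) (?e, 0) (?e,0)) (at 0)"
    unfolding has_vector_derivative_def by simp
  have "((\<lambda>s. partial i (\<lambda>y'. w y' t) (x + s *\<^sub>R ?e)) has_vector_derivative D2 (x,t) (?e, 0) (?e,0)) (at 0)"
  proof (rule has_vector_derivative_transform_within_open[OF hv oS S0])
    fix y assume "y \<in> S"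
    then show "D (x + y *\<^sub>R ?e, t) (?e, 0) = partial i (\<lambda>y'. w y' t) (x + y *\<^sub>R ?e)"
      by (rule eq)
  qed
  then show ?thesis unfolding partial_def using vector_derivative_at by blast
qed

lemma cont_limit_eq:
  fixes A B :: "'a::metric_space \<Rightarrow> 'b::metric_space"
  assumes "continuous (at p) A" "continuous (at p) B" "\<And>y. y \<in> S \<Longrightarrow> A y = B y" "p \<in> closure S"
  shows "A p = B p"
proof -
  obtain xs where xs: "\<And>n. xs n \<in> S" "xs \<longlonglongrightarrow> p" using assms(4) closure_sequential by blast
  have 1: "(\<lambda>n. A (xs n)) \<longlonglongrightarrow> A p" by (rule isCont_tendsto_compose[OF assms(1) xs(2)])
  have 2: "(\<lambda>n. B (xs n)) \<longlonglongrightarrow> B p" by (rule isCont_tendsto_compose[OF assms(2) xs(2)])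
  have "(\<lambda>n. A (xs n)) = (\<lambda>n. B (xs n))" using xs assms(3) by auto
  with 1 have "(\<lambda>n. B (xs n)) \<longlonglongrightarrow> A p" by simp
  from LIMSEQ_unique[OF this 2] show ?thesis .
qed

lemma C2_first:
  assumes "C2_on F U"
  obtains DF where "\<And>z. z \<in> U \<Longrightarrow> (F has_derivative blinfun_apply (DF z)) (at z)"
    "continuous_on U DF" "continuous_on U F"
proof -
  obtain DF where 1: "\<forall>z\<in>U. (F has_derivative blinfun_apply (DF z)) (at z)" and "C1_on DF U"
    using assms unfolding C2_on_def by blast
  then obtain DF2 where 2: "\<forall>z\<in>U. (DF has_derivative blinfun_apply (DF2 z)) (at z)"
    unfolding C1_on_def by blast
  have "isCont DF z" if "z \<in> U" for z
    using has_derivative_continuous 2 that by blast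
  then have "continuous_on U DF" by (simp add: continuous_at_imp_continuous_on)
  moreover have "isCont F z" if "z \<in> U" for z
    using has_derivative_continuous 1 that by blast
  then have "continuous_on U F" by (simp add: continuous_at_imp_continuous_on)
  ultimately show ?thesis using 1 that by blast
qed

lemma C2_second:
  assumes "C2_on F U"
  obtains DF DF2 where "\<And>z. z \<in> U \<Longrightarrow> (F has_derivative blinfun_apply (DF z)) (at z)"
    "\<And>z. z \<in> U \<Longrightarrow> (DF has_derivative blinfun_apply (DF2 z)) (at z)"
    "continuous_on U DF2" "continuous_on U DF"
proof -
  obtain DF where 1: "\<forall>z\<in>U. (F has_derivative blinfun_apply (DF z)) (at z)" and "C1_on DF U"
    using assms unfolding C2_on_def by blast
  then obtain DF2 where 2: "\<forall>z\<in>U. (DF has_derivative blinfun_apply (DF2 z)) (at z)"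
    and 3: "continuous_on U DF2"
    unfolding C1_on_def by blast
  have "isCont DF z" if "z \<in> U" for z
    using has_derivative_continuous 2 that by blast
  then have "continuous_on U DF" by (simp add: continuous_at_imp_continuous_on)
  then show ?thesis using 1 2 3 that by blast
qed

lemma ode:
  fixes f :: "real \<Rightarrow> real"
  assumes deriv: "\<And>s. s \<ge> t0 \<Longrightarrow> (f has_real_derivative (- lam * f s)) (at s)"
    and t: "t \<ge> t0"
  shows "f t = exp (- lam * (t - t0)) * f t0"
proof -
    define h where "h s = exp (lam * (s - t0)) * f s" for s
    have hd: "(h has_real_derivative 0) (at s)" if "s \<ge> t0" for s
    proof -
      have "(h has_real_derivative (lam * exp (lam * (s - t0)) * f s + exp (lam * (s - t0)) * (- lam * f s))) (at s)"
        unfolding h_def using deriv[OF that]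
        by (auto intro!: derivative_eq_intros)
      then show ?thesis by (simp add: algebra_simps)
    qed
    have "h t = h t0"
    proof (cases "t = t0")
      case False
      then have lt: "t0 < t" using t by simp
      have ic: "isCont h s" if "s \<in> {t0..t}" for s
        using that by (intro DERIV_isCont[OF hd]) simp
      have ch: "continuous_on {t0..t} h"
        using ic by (simp add: continuous_at_imp_continuous_on)
      show ?thesis
      proof (rule DERIV_isconst2[OF lt ch _ t order.refl])
        fix x assume "t0 < x" "x < t"
        then show "(h has_real_derivative 0) (at x)" by (intro hd) simp
      qed
    qed simp
    then have e: "exp (lam * (t - t0)) * f t = f t0" by (simp add: h_def)
    have "exp (- lam * (t - t0)) * exp (lam * (t - t0)) = 1"
      by (simp flip: exp_add)
    then have "f t = exp (- lam * (t - t0)) * (exp (lam * (t - t0)) * f t)"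
      by (simp flip: mult.assoc)
    then show ?thesis using e by simp
qed

lemma cont_slice:
  assumes "continuous_on U F"
  shows "continuous_on ((\<lambda>y. (y,t)) -` U) (\<lambda>y. F (y,t))"
proof -
  have c: "continuous_on ((\<lambda>y. (y,t)) -` U) (\<lambda>y. (y,t))"
    by (intro continuous_on_Pair continuous_on_id continuous_on_const)
  have s: "(\<lambda>y. (y,t)) ` ((\<lambda>y. (y,t)) -` U) \<subseteq> U" by auto
  show ?thesis using continuous_on_compose2[OF assms c s] .
qed

theorem lemma5:
  fixes \<Omega> :: "(real^'n::finite) set"
    and nrm :: "real^'n \<Rightarrow> real^'n"
    and w u g :: "real^'n \<Rightarrow> real \<Rightarrow> real^'n"
    and q :: "real^'n \<Rightarrow> real \<Rightarrow> real"
    and \<nu> lam t0 :: real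
    and U :: "((real^'n) \<times> real) set"
  assumes dom: "open \<Omega>" "bounded \<Omega>" "connected \<Omega>" "\<Omega> \<noteq> {}"
    and normal: "outward_unit_normal \<Omega> nrm"
    and visc: "\<nu> > 0" and pen: "lam \<ge> 0"
    and U: "open U" "closure \<Omega> \<times> {t0..} \<subseteq> U"
    and smooth: "C2_on (\<lambda>(x,t). w x t) U" "C2_on (\<lambda>(x,t). u x t) U"
                "C2_on (\<lambda>(x,t). q x t) U" "C2_on (\<lambda>(x,t). g x t) U"
    and momentum: "\<And>x t. x \<in> \<Omega> \<Longrightarrow> t \<ge> t0 \<Longrightarrow>
        dt w x t = g x t - conv (\<lambda>y. u y t) (\<lambda>y. u y t) x - grad (\<lambda>y. q y t) x
                   + \<nu> *\<^sub>R lap (\<lambda>y. w y t) x"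
    and w_tangential: "\<And>p t \<tau>. p \<in> frontier \<Omega> \<Longrightarrow> t \<ge> t0 \<Longrightarrow>
        norm \<tau> = 1 \<Longrightarrow> \<tau> \<bullet> nrm p = 0 \<Longrightarrow> w p t \<bullet> \<tau> = 0"
    and w_div_bdry: "\<And>p t. p \<in> frontier \<Omega> \<Longrightarrow> t \<ge> t0 \<Longrightarrow> divg (\<lambda>y. w y t) p = 0"
    and projection: "\<And>t. t \<ge> t0 \<Longrightarrow> \<exists>\<phi> V. open V \<and> closure \<Omega> \<subseteq> V \<and> C2_on \<phi> V \<and>
        (\<forall>x\<in>\<Omega>. lap \<phi> x = divg (\<lambda>y. w y t) x) \<and>
        (\<forall>p\<in>frontier \<Omega>. nrm p \<bullet> grad \<phi> p = nrm p \<bullet> w p t) \<and>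
        (\<forall>x\<in>\<Omega>. u x t = w x t - grad \<phi> x)"
    and u_bdry: "\<And>p t. p \<in> frontier \<Omega> \<Longrightarrow> t \<ge> t0 \<Longrightarrow> u p t \<bullet> nrm p = 0"
    and pressure: "\<And>x t. x \<in> \<Omega> \<Longrightarrow> t \<ge> t0 \<Longrightarrow>
        lap (\<lambda>y. q y t) x = divg (\<lambda>y. g y t - conv (\<lambda>z. u z t) (\<lambda>z. u z t) y) x"
    and pressure_bdry: "\<And>p t. p \<in> frontier \<Omega> \<Longrightarrow> t \<ge> t0 \<Longrightarrow>
        nrm p \<bullet> grad (\<lambda>y. q y t) p =
          nrm p \<bullet> (g p t - conv (\<lambda>y. u y t) (\<lambda>y. u y t) p + \<nu> *\<^sub>R lap (\<lambda>y. w y t) p)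
          + lam * (nrm p \<bullet> w p t)"
    and init: "\<And>x. x \<in> closure \<Omega> \<Longrightarrow> w x t0 = u x t0"
  shows "(\<forall>p\<in>frontier \<Omega>. \<forall>t\<ge>t0.
            ((\<lambda>s. nrm p \<bullet> w p s) has_real_derivative (- lam * (nrm p \<bullet> w p t))) (at t))
       \<and> (\<forall>p\<in>frontier \<Omega>. \<forall>t\<ge>t0. nrm p \<bullet> w p t = exp (- lam * (t - t0)) * (nrm p \<bullet> w p t0))
       \<and> ((\<forall>p\<in>frontier \<Omega>. nrm p \<bullet> w p t0 = 0) \<longrightarrow>
            (\<forall>p\<in>frontier \<Omega>. \<forall>t>t0. nrm p \<bullet> w p t = 0))"
proof -
  obtain Dw D2w where Dw: "\<And>z. z \<in> U \<Longrightarrow> ((\<lambda>(x,t). w x t) has_derivative blinfun_apply (Dw z)) (at z)"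
    and D2w: "\<And>z. z \<in> U \<Longrightarrow> (Dw has_derivative blinfun_apply (D2w z)) (at z)"
    and cD2w: "continuous_on U D2w" and cDw: "continuous_on U Dw"
    using C2_second[OF smooth(1)] by metis
  obtain Du where Du: "\<And>z. z \<in> U \<Longrightarrow> ((\<lambda>(x,t). u x t) has_derivative blinfun_apply (Du z)) (at z)"
    and cDu: "continuous_on U Du" and cu: "continuous_on U (\<lambda>(x,t). u x t)"
    using C2_first[OF smooth(2)] by metis
  obtain Dq where Dq: "\<And>z. z \<in> U \<Longrightarrow> ((\<lambda>(x,t). q x t) has_derivative blinfun_apply (Dq z)) (at z)"
    and cDq: "continuous_on U Dq"
    using C2_first[OF smooth(3)] by metis
  obtain Dg where cg: "continuous_on U (\<lambda>(x,t). g x t)"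
    using C2_first[OF smooth(4)] by metis
  have Uin: "(x, t) \<in> U" if "x \<in> closure \<Omega>" "t \<ge> t0" for x t
    using U(2) that by auto
  have key: "nrm p \<bullet> dt w p t = - lam * (nrm p \<bullet> w p t)" if p: "p \<in> frontier \<Omega>" and t: "t \<ge> t0" for p t
  proof -
    define V where "V = (\<lambda>y. (y,t)) -` U"
    have oV: "open V" unfolding V_def
      by (rule continuous_open_vimage[OF U(1)]) (auto intro!: continuous_intros)
    have clV: "closure \<Omega> \<subseteq> V" using Uin t by (auto simp: V_def)
    have pcl: "p \<in> closure \<Omega>" using p by (simp add: frontier_def)
    have pV: "p \<in> V" using pcl clV by auto
    define A where "A y = Dw (y,t) (0,1)" for y
    define B where "B y = g y t - (\<Sum>i\<in>UNIV. (u y t $ i) *\<^sub>R Du (y,t) (axis i 1, 0))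
        - (\<chi> i. Dq (y,t) (axis i 1, 0)) + \<nu> *\<^sub>R (\<Sum>i\<in>UNIV. D2w (y,t) (axis i 1, 0) (axis i 1, 0))" for y
    have eqA: "dt w y t = A y" if "y \<in> V" for y
      unfolding A_def by (rule dt_eq[OF Dw]) (use that in \<open>simp add: V_def\<close>)
    have eqB: "g y t - conv (\<lambda>y. u y t) (\<lambda>y. u y t) y - grad (\<lambda>y. q y t) y
                   + \<nu> *\<^sub>R lap (\<lambda>y. w y t) y = B y" if "y \<in> V" for y
    proof -
      have yU: "(y,t) \<in> U" using that by (simp add: V_def)
      have "\<And>i. partial i (\<lambda>y. u y t) y = Du (y,t) (axis i 1, 0)"
        by (rule partial_eq[OF Du[OF yU]])
      moreover have "\<And>i. partial i (\<lambda>y. q y t) y = Dq (y,t) (axis i 1, 0)"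
        by (rule partial_eq[OF Dq[OF yU]])
      moreover have "\<And>i. partial i (\<lambda>y. partial i (\<lambda>y'. w y' t) y) y = D2w (y,t) (axis i 1, 0) (axis i 1, 0)"
        by (rule partial2_eq[OF U(1) yU Dw D2w])
      ultimately show ?thesis by (simp add: B_def conv_def grad_def lap_def)
    qed
    have cA: "continuous_on V A"
      unfolding A_def V_def by (intro continuous_intros cont_slice cDw)
    have cB: "continuous_on V B"
      unfolding B_def V_def
      using cont_slice[OF cg, of t] cont_slice[OF cu, of t]
      by (intro continuous_intros cont_slice cDu cDq cD2w) auto
    have "A p = B p"
    proof (rule cont_limit_eq[OF _ _ _ pcl])
      show "isCont A p" using cA oV pV by (simp add: continuous_on_eq_continuous_at)
      show "isCont B p" using cB oV pV by (simp add: continuous_on_eq_continuous_at)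
      show "A y = B y" if "y \<in> \<Omega>" for y
      proof -
        have yV: "y \<in> V" using that clV closure_subset by blast
        show ?thesis using momentum[OF that t] eqA[OF yV] eqB[OF yV] by simp
      qed
    qed
    then have "dt w p t = g p t - conv (\<lambda>y. u y t) (\<lambda>y. u y t) p - grad (\<lambda>y. q y t) p
                   + \<nu> *\<^sub>R lap (\<lambda>y. w y t) p"
      using eqA[OF pV] eqB[OF pV] by simp
    then have e1: "nrm p \<bullet> dt w p t = nrm p \<bullet> g p t - nrm p \<bullet> conv (\<lambda>y. u y t) (\<lambda>y. u y t) p
        - nrm p \<bullet> grad (\<lambda>y. q y t) p + \<nu> * (nrm p \<bullet> lap (\<lambda>y. w y t) p)"
      by (simp only: inner_diff_right inner_add_right inner_scaleR_right)
    have e2: "nrm p \<bullet> grad (\<lambda>y. q y t) p = nrm p \<bullet> g p t - nrm p \<bullet> conv (\<lambda>y. u y t) (\<lambda>y. u y t) p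
        + \<nu> * (nrm p \<bullet> lap (\<lambda>y. w y t) p) + lam * (nrm p \<bullet> w p t)"
      using pressure_bdry[OF p t] by (simp only: inner_diff_right inner_add_right inner_scaleR_right)
    show ?thesis using e1 e2 by linarith
  qed
  have deriv: "((\<lambda>s. nrm p \<bullet> w p s) has_real_derivative (- lam * (nrm p \<bullet> w p t))) (at t)"
    if p: "p \<in> frontier \<Omega>" and t: "t \<ge> t0" for p t
  proof -
    have pcl: "p \<in> closure \<Omega>" using p by (simp add: frontier_def)
    have hv: "((\<lambda>s. w p s) has_vector_derivative dt w p t) (at t)"
      using dt_D[OF Dw[OF Uin[OF pcl t]]] dt_eq[OF Dw[OF Uin[OF pcl t]]] by simp
    have hd: "((\<lambda>s. nrm p \<bullet> w p s) has_derivative (\<lambda>h. nrm p \<bullet> (h *\<^sub>R dt w p t))) (at t)"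
      using hv unfolding has_vector_derivative_def by (rule has_derivative_inner_right)
    have eqf: "(\<lambda>h. nrm p \<bullet> (h *\<^sub>R dt w p t)) = (*) (nrm p \<bullet> dt w p t)"
      by (rule ext) (simp add: inner_scaleR_right mult.commute)
    have "((\<lambda>s. nrm p \<bullet> w p s) has_real_derivative (nrm p \<bullet> dt w p t)) (at t)"
      using hd unfolding has_field_derivative_def eqf .
    then show ?thesis using key[OF p t] by simp
  qed
  have sol: "nrm p \<bullet> w p t = exp (- lam * (t - t0)) * (nrm p \<bullet> w p t0)"
    if p: "p \<in> frontier \<Omega>" and t: "t \<ge> t0" for p t
    using ode[of t0 "\<lambda>s. nrm p \<bullet> w p s" lam t] deriv[OF p] t by blast
  have z: "\<forall>p\<in>frontier \<Omega>. \<forall>t>t0. nrm p \<bullet> w p t = 0" if "\<forall>p\<in>frontier \<Omega>. nrm p \<bullet> w p t0 = 0"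
    using sol that by simp
  show ?thesis using deriv sol z by blast
qed

end
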